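(* Let $(T,X)$ be a compact flow (with $T$ a Hausdorff topological group and $X$ a compact Hausdorff space) and let $S$ be a thick subsemigroup of $T$. If $(T,X)$ is Lyapunov $S$-stable, then $(T,X)$ is an a.p. flow.
   Context: $\mathscr U_X$ is the uniformity of $X$; $\varepsilon[A]=\{y:\exists a\in A,(a,y)\in\varepsilon\}$. $S\subseteq T$ is (right) thick if for every compact $K\subseteq T$ there is $t$ with $Kt\subseteq S$; $A\subseteq T$ is (right) syndetic if there is compact $K$ with $Kt\cap A\neq\emptyset$ for all $t$. The flow is Lyapunov $S$-stable if for every $\varepsilon\in\mathscr U_X$ and every $x\in X$ there is $\delta\in\mathscr U_X$ with $t(\delta[x])\subseteq\varepsilon[tx]$ for all $t\in S$. A flow is an a.p. flow if for every $\alpha\in\mathscr U_X$ there is a syndetic $A\subseteq T$ with $Ax\subseteq\alpha[x]$ for all $x\in X$. *)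

theory Defs
  imports "HOL-Analysis.Analysis"
begin

text \<open>The group T is written additively (type class group_add, not necessarily
commutative); the flow is a continuous left action act of T on X.\<close>

definition flow :: "('t::topological_group_add \<Rightarrow> 'x::topological_space \<Rightarrow> 'x) \<Rightarrow> bool" where
  "flow act \<longleftrightarrow> continuous_on UNIV (\<lambda>(t, x). act t x)
      \<and> (\<forall>x. act 0 x = x) \<and> (\<forall>s t x. act (s + t) x = act s (act t x))"

text \<open>The (unique) uniformity of a compact Hausdorff space: all neighbourhoods of the diagonal.\<close>
definition unif :: "('x::topological_space \<times> 'x) set set" where
  "unif = {e. \<exists>W. open W \<and> Id \<subseteq> W \<and> W \<subseteq> e}"

definition ent :: "('x \<times> 'x) set \<Rightarrow> 'x set \<Rightarrow> 'x set" where
  "ent e A = {y. \<exists>a\<in>A. (a, y) \<in> e}"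

definition subsemigroup :: "'t::plus set \<Rightarrow> bool" where
  "subsemigroup S \<longleftrightarrow> (\<forall>a\<in>S. \<forall>b\<in>S. a + b \<in> S)"

definition thick :: "'t::{topological_space, plus} set \<Rightarrow> bool" where
  "thick S \<longleftrightarrow> (\<forall>K. compact K \<longrightarrow> (\<exists>t. (\<lambda>k. k + t) ` K \<subseteq> S))"

definition syndetic :: "'t::{topological_space, plus} set \<Rightarrow> bool" where
  "syndetic A \<longleftrightarrow> (\<exists>K. compact K \<and> (\<forall>t. (\<lambda>k. k + t) ` K \<inter> A \<noteq> {}))"

definition lyapunov_stable :: "('t \<Rightarrow> 'x::topological_space \<Rightarrow> 'x) \<Rightarrow> 't set \<Rightarrow> bool" where
  "lyapunov_stable act S \<longleftrightarrow> (\<forall>e\<in>unif. \<forall>x. \<exists>d\<in>unif. \<forall>t\<in>S.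
      act t ` ent d {x} \<subseteq> ent e {act t x})"

definition ap_flow :: "('t::{topological_space, plus} \<Rightarrow> 'x::topological_space \<Rightarrow> 'x) \<Rightarrow> bool" where
  "ap_flow act \<longleftrightarrow> (\<forall>a\<in>unif. \<exists>A. syndetic A \<and> (\<forall>x. (\<lambda>s. act s x) ` A \<subseteq> ent a {x}))"

end

theory Submission imports Defs begin

definition gauge :: "('x::topological_space \<Rightarrow> 'x \<Rightarrow> real) \<Rightarrow> bool" where
  "gauge d \<longleftrightarrow> continuous_on UNIV (\<lambda>p. d (fst p) (snd p)) \<and> (\<forall>x. d x x = 0)
     \<and> (\<forall>x y. d x y = d y x) \<and> (\<forall>x y z. d x z \<le> d x y + d y z)"

lemma gauge_refl: "gauge d \<Longrightarrow> d x x = 0" by (simp add: gauge_def)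
lemma gauge_sym: "gauge d \<Longrightarrow> d x y = d y x" unfolding gauge_def by blast
lemma gauge_tri: "gauge d \<Longrightarrow> d x z \<le> d x y + d y z" unfolding gauge_def by blast

lemma gauge_cont1: "gauge d \<Longrightarrow> continuous_on UNIV (\<lambda>y. d q y)"
proof -
  assume g: "gauge d"
  have "continuous_on UNIV ((\<lambda>p. d (fst p) (snd p)) \<circ> (\<lambda>y. (q, y)))"
    proof (rule continuous_on_compose)
      show "continuous_on UNIV (Pair q)" by (intro continuous_intros)
      show "continuous_on (range (Pair q)) (\<lambda>p. d (fst p) (snd p))"
        using g unfolding gauge_def by (meson continuous_on_subset subset_UNIV)
    qed
  then show ?thesis by (simp add: o_def)
qed

lemma gauge_open_ball: "gauge d \<Longrightarrow> open {y. d q y < e}"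
  by (rule open_Collect_less) (auto intro: gauge_cont1 continuous_on_const)

lemma gauge_unif: assumes "gauge d" "e > 0" shows "{(x,y). d x y < e} \<in> unif"
proof -
  have "open {p. d (fst p) (snd p) < e}"
    by (rule open_Collect_less) (use assms in \<open>auto simp: gauge_def intro: continuous_on_const\<close>)
  moreover have "{p. d (fst p) (snd p) < e} = {(x,y). d x y < e}" by auto
  moreover have "Id \<subseteq> {(x,y). d x y < e}" using assms by (auto simp: gauge_refl)
  ultimately show ?thesis unfolding unif_def by auto
qed

lemma sep:
  fixes a b :: "'x::t2_space"
  assumes "compact (UNIV::'x set)" "a \<noteq> b"
  shows "\<exists>f :: 'x \<Rightarrow> real. continuous_on UNIV f \<and> f a = 0 \<and> f b = 1"
proof -
  have H: "Hausdorff_space (euclidean::'x topology)"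
    unfolding Hausdorff_space_def using hausdorff by (auto simp: disjnt_def)
  have C: "compact_space (euclidean::'x topology)"
    using assms(1) by (simp add: compact_space_def)
  have N: "normal_space (euclidean::'x topology)"
    using compact_Hausdorff_or_regular_imp_normal_space H C by blast
  obtain f where f: "continuous_map euclidean (top_of_set {0..1::real}) f" "f ` {a} \<subseteq> {0}" "f ` {b} \<subseteq> {1}"
    using Urysohn_lemma[OF N, of "{a}" "{b}" 0 1] assms(2) by (auto simp: disjnt_def)
  have "continuous_on UNIV f" using f(1)
    by (simp add: continuous_map_in_subtopology continuous_map_iff_continuous)
  then show ?thesis using f by auto
qed

lemma gauge_exists:
  fixes W :: "('x::t2_space \<times> 'x) set"
  assumes cpt: "compact (UNIV::'x set)" and W: "open W" "Id \<subseteq> W"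
  obtains d where "gauge d" "\<And>x y. d x y < 1 \<Longrightarrow> (x,y) \<in> W"
proof -
  define C where "C = UNIV \<inter> (- W)"
  have "compact (UNIV :: ('x \<times> 'x) set)"
    using compact_Times[OF cpt cpt] by simp
  then have cC: "compact C" unfolding C_def using compact_Int_closed closed_Compl W(1) by blast
  have "\<forall>p\<in>C. \<exists>f :: 'x \<Rightarrow> real. continuous_on UNIV f \<and> f (fst p) = 0 \<and> f (snd p) = 1"
  proof
    fix p assume "p \<in> C"
    then have "fst p \<noteq> snd p" using W(2) unfolding C_def by (cases p) auto
    then show "\<exists>f :: 'x \<Rightarrow> real. continuous_on UNIV f \<and> f (fst p) = 0 \<and> f (snd p) = 1"
      using sep[OF cpt] by blast
  qed
  from bchoice[OF this] obtain F :: "'x \<times> 'x \<Rightarrow> 'x \<Rightarrow> real" where F0: "\<forall>p\<in>C. continuous_on UNIV (F p) \<and> F p (fst p) = 0 \<and> F p (snd p) = 1"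
    by blast
  then have F: "\<And>p. p \<in> C \<Longrightarrow> continuous_on UNIV (F p) \<and> F p (fst p) = 0 \<and> F p (snd p) = 1" by blast
  have contF: "continuous_on UNIV (\<lambda>q. \<bar>F p (fst q) - F p (snd q)\<bar>)" if "p \<in> C" for p
  proof -
    have c: "continuous_on UNIV (F p)" using F[OF that] by blast
    have "continuous_on UNIV (\<lambda>q. F p (fst q))"
      by (rule continuous_on_compose2[OF c continuous_on_fst[OF continuous_on_id]]) auto
    moreover have "continuous_on UNIV (\<lambda>q. F p (snd q))"
      by (rule continuous_on_compose2[OF c continuous_on_snd[OF continuous_on_id]]) auto
    ultimately show ?thesis by (intro continuous_on_rabs continuous_on_diff)
  qed
  define Op where "Op p = {q. 1/2 < \<bar>F p (fst q) - F p (snd q)\<bar>}" for p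
  have "open (Op p)" if "p \<in> C" for p
    unfolding Op_def by (rule open_Collect_less) (use contF[OF that] in \<open>auto intro: continuous_on_const\<close>)
  moreover have "C \<subseteq> (\<Union>p\<in>C. Op p)"
  proof
    fix p assume "p \<in> C"
    then have "p \<in> Op p" using F[of p] by (simp add: Op_def)
    then show "p \<in> (\<Union>p\<in>C. Op p)" using \<open>p \<in> C\<close> by blast
  qed
  ultimately obtain D where D: "D \<subseteq> C" "finite D" "C \<subseteq> (\<Union>p\<in>D. Op p)"
    using compactE_image[OF cC, of C Op] by blast
  define d where "d x y = 2 * (\<Sum>p\<in>D. \<bar>F p x - F p y\<bar>)" for x y
  have "gauge d"
    unfolding gauge_def
  proof (intro conjI allI)
    show "continuous_on UNIV (\<lambda>p. d (fst p) (snd p))"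
      unfolding d_def by (intro continuous_on_mult continuous_on_const continuous_on_sum) (use contF D(1) in blast)
    show "d x x = 0" for x by (simp add: d_def)
    show "d x y = d y x" for x y by (simp add: d_def abs_minus_commute)
    show "d x z \<le> d x y + d y z" for x y z
    proof -
      have "(\<Sum>p\<in>D. \<bar>F p x - F p z\<bar>) \<le> (\<Sum>p\<in>D. \<bar>F p x - F p y\<bar> + \<bar>F p y - F p z\<bar>)"
        by (rule sum_mono) linarith
      then show ?thesis by (simp add: d_def sum.distrib)
    qed
  qed
  moreover have "(x,y) \<in> W" if "d x y < 1" for x y
  proof (rule ccontr)
    assume "(x,y) \<notin> W"
    then have "(x,y) \<in> C" by (simp add: C_def)
    then obtain p where p: "p \<in> D" "1/2 < \<bar>F p x - F p y\<bar>" using D(3) unfolding Op_def by auto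
    have "\<bar>F p x - F p y\<bar> \<le> (\<Sum>p\<in>D. \<bar>F p x - F p y\<bar>)"
      by (rule member_le_sum) (use p D in auto)
    then show False using p that by (simp add: d_def)
  qed
  ultimately show thesis using that by blast
qed

lemma gauge_net:
  fixes d :: "'x::topological_space \<Rightarrow> 'x \<Rightarrow> real"
  assumes cpt: "compact (UNIV::'x::topological_space set)" and g: "gauge d" and e: "e > 0"
  shows "\<exists>Q. finite Q \<and> (\<forall>x. \<exists>q\<in>Q. d q x < e)"
proof -
  have "UNIV \<subseteq> (\<Union>q\<in>UNIV. {y. d q y < e})" using g e by (auto simp: gauge_refl)
  then obtain Q where "finite Q" "UNIV \<subseteq> (\<Union>q\<in>Q. {y. d q y < e})"
    by (rule compactE_image[OF cpt gauge_open_ball[OF g]])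
  then show ?thesis by blast
qed

fun rep :: "nat \<Rightarrow> 'a::group_add \<Rightarrow> 'a" where
  "rep 0 r = 0"
| "rep (Suc l) r = rep l r + r"

lemma rep_add: "rep (a + b) r = rep a r + rep b r"
  by (induction b) (simp_all add: add.assoc)

lemma rep_in: "subsemigroup S \<Longrightarrow> r \<in> S \<Longrightarrow> l \<ge> 1 \<Longrightarrow> rep l r \<in> S"
proof (induction l)
  case 0 then show ?case by simp
next
  case (Suc l) then show ?case
    by (cases l) (auto simp: subsemigroup_def)
qed

context
  fixes act :: "'t::topological_group_add \<Rightarrow> 'x::t2_space \<Rightarrow> 'x" and S :: "'t set"
  assumes cpt: "compact (UNIV :: 'x set)"
    and fl: "flow act"
    and sg: "subsemigroup S" and th: "thick S"
    and ly: "lyapunov_stable act S"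
begin

lemma act_add: "act (s + t) x = act s (act t x)"
  using fl by (simp add: flow_def)

lemma act_zero: "act 0 x = x"
  using fl by (simp add: flow_def)

lemma act_neg1: "act (- u) (act u z) = z"
  by (metis act_add act_zero add.left_inverse)

lemma act_neg2: "act u (act (- u) z) = z"
  by (metis act_add act_zero add.right_inverse)

lemma equicont:
  assumes g: "gauge d" and e: "e > 0"
  obtains d' where "gauge d'" "\<And>x y s. d' x y < 1 \<Longrightarrow> s \<in> S \<Longrightarrow> d (act s x) (act s y) < e"
proof -
  define E0 where "E0 = {(x,y). d x y < e/2}"
  have E0: "E0 \<in> unif" unfolding E0_def by (rule gauge_unif[OF g]) (use e in auto)
  have "\<forall>x. \<exists>D\<in>unif. \<forall>t\<in>S. act t ` ent D {x} \<subseteq> ent E0 {act t x}"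
    using ly E0 unfolding lyapunov_stable_def by blast
  then obtain D where D: "\<And>x. D x \<in> unif" "\<And>x t. t \<in> S \<Longrightarrow> act t ` ent (D x) {x} \<subseteq> ent E0 {act t x}"
    by metis
  have "\<forall>x. \<exists>W. open W \<and> Id \<subseteq> W \<and> W \<subseteq> D x" using D(1) unfolding unif_def by blast
  then obtain Wf where Wf: "\<And>x. open (Wf x)" "\<And>x. Id \<subseteq> Wf x" "\<And>x. Wf x \<subseteq> D x" by metis
  define G where "G x = Pair x -` Wf x" for x
  have Gopen: "open (G x)" for x
    unfolding G_def by (rule continuous_open_vimage[OF Wf(1)]) (intro continuous_intros)
  have Gx: "x \<in> G x" for x using Wf(2)[of x] by (auto simp: G_def)
  have Gd: "d (act s x) (act s y) < e/2" if "y \<in> G x" "s \<in> S" for x y s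
  proof -
    have "y \<in> ent (D x) {x}" using that(1) Wf(3)[of x] by (auto simp: G_def ent_def)
    then have "act s y \<in> ent E0 {act s x}" using D(2)[OF that(2), of x] by blast
    then show ?thesis by (auto simp: ent_def E0_def)
  qed
  define W where "W = (\<Union>x. G x \<times> G x)"
  have "open W" unfolding W_def using Gopen by (auto intro!: open_Times)
  moreover have "Id \<subseteq> W" unfolding W_def using Gx by auto
  ultimately obtain d' where d': "gauge d'" "\<And>x y. d' x y < 1 \<Longrightarrow> (x,y) \<in> W"
    using gauge_exists[OF cpt] by blast
  show thesis
  proof (rule that[OF d'(1)])
    fix x y s assume "d' x y < 1" "s \<in> S"
    then obtain z where z: "x \<in> G z" "y \<in> G z" using d'(2) unfolding W_def by blast
    have "d (act s x) (act s y) \<le> d (act s x) (act s z) + d (act s z) (act s y)"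
      by (rule gauge_tri[OF g])
    also have "\<dots> = d (act s z) (act s x) + d (act s z) (act s y)"
      using gauge_sym[OF g] by simp
    also have "\<dots> < e" using Gd[OF z(1) \<open>s \<in> S\<close>] Gd[OF z(2) \<open>s \<in> S\<close>] by simp
    finally show "d (act s x) (act s y) < e" .
  qed
qed

lemma tb_S:
  assumes g: "gauge d" and e: "e > 0"
  shows "\<exists>N. finite N \<and> N \<subseteq> S \<and> (\<forall>s\<in>S. \<exists>n\<in>N. \<forall>x. d (act n x) (act s x) < e)"
proof -
  obtain d' where d': "gauge d'" "\<And>x y s. d' x y < 1 \<Longrightarrow> s \<in> S \<Longrightarrow> d (act s x) (act s y) < e/3"
    using equicont[OF g, of "e/3"] e by auto
  obtain C where C: "finite C" "\<And>x. \<exists>c\<in>C. d' c x < 1"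
    using gauge_net[OF cpt d'(1), of 1] by auto
  obtain Q where Q: "finite Q" "\<And>x. \<exists>q\<in>Q. d q x < e/6"
    using gauge_net[OF cpt g, of "e/6"] e by auto
  define sig where "sig s = restrict (\<lambda>c. SOME q. q \<in> Q \<and> d q (act s c) < e/6) C" for s
  have sigQ: "sig s c \<in> Q \<and> d (sig s c) (act s c) < e/6" if "c \<in> C" for s c
  proof -
    have "\<exists>q. q \<in> Q \<and> d q (act s c) < e/6" using Q(2) by blast
    then have "(SOME q. q \<in> Q \<and> d q (act s c) < e/6) \<in> Q \<and> d (SOME q. q \<in> Q \<and> d q (act s c) < e/6) (act s c) < e/6"
      by (rule someI_ex)
    then show ?thesis unfolding sig_def using that by simp
  qed
  have sigPi: "sig s \<in> PiE C (\<lambda>_. Q)" for s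
    using sigQ by (auto simp: sig_def)
  define rp where "rp \<sigma> = (SOME s. s \<in> S \<and> sig s = \<sigma>)" for \<sigma>
  define N where "N = rp ` sig ` S"
  have rp: "rp (sig s) \<in> S \<and> sig (rp (sig s)) = sig s" if "s \<in> S" for s
  proof -
    have "\<exists>s'. s' \<in> S \<and> sig s' = sig s" using that by blast
    then show ?thesis unfolding rp_def by (rule someI_ex)
  qed
  have "finite (sig ` S)"
    by (rule finite_subset[OF _ finite_PiE[OF C(1)]]) (use sigPi Q(1) in auto)
  then have "finite N" unfolding N_def by simp
  moreover have "N \<subseteq> S" unfolding N_def using rp by auto
  moreover have "\<exists>n\<in>N. \<forall>x. d (act n x) (act s x) < e" if s: "s \<in> S" for s
  proof (intro bexI allI)
    define n where "n = rp (sig s)"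
    show "n \<in> N" unfolding n_def N_def using s by blast
    have nS: "n \<in> S" and sn: "sig n = sig s" using rp[OF s] by (auto simp: n_def)
    have cl: "d (act n c) (act s c) < e/3" if "c \<in> C" for c
    proof -
      have "d (act n c) (act s c) \<le> d (act n c) (sig s c) + d (sig s c) (act s c)"
        by (rule gauge_tri[OF g])
      also have "\<dots> = d (sig n c) (act n c) + d (sig s c) (act s c)"
        using gauge_sym[OF g] sn by simp
      also have "\<dots> < e/3" using sigQ[OF that, of n] sigQ[OF that, of s] by simp
      finally show ?thesis .
    qed
    fix x
    obtain c where c: "c \<in> C" "d' c x < 1" using C(2) by blast
    have "d (act n x) (act s x) \<le> d (act n x) (act n c) + d (act n c) (act s x)"
      by (rule gauge_tri[OF g])
    also have "\<dots> \<le> d (act n x) (act n c) + (d (act n c) (act s c) + d (act s c) (act s x))"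
      using gauge_tri[OF g] by simp
    also have "\<dots> = d (act n c) (act n x) + d (act n c) (act s c) + d (act s c) (act s x)"
      using gauge_sym[OF g] by simp
    also have "\<dots> < e/3 + e/3 + e/3"
      using d'(2)[OF c(2) nS] d'(2)[OF c(2) s] cl[OF c(1)] by linarith
    finally show "d (act n x) (act s x) < e" by simp
  qed
  ultimately show ?thesis by blast
qed

lemma tb_negS:
  assumes g: "gauge d" and e: "e > 0"
  shows "\<exists>M. finite M \<and> (\<forall>r\<in>S. \<exists>m\<in>M. \<forall>y. d (act (- r) y) (act m y) < e)"
proof -
  obtain N where N: "finite N" "N \<subseteq> S" "\<And>s. s \<in> S \<Longrightarrow> \<exists>n\<in>N. \<forall>x. d (act n x) (act s x) < e/4"
    using tb_S[OF g, of "e/4"] e by auto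
  have "\<exists>m\<in>insert 0 N. \<forall>y. d (act (- r) y) (act m y) < e" if r: "r \<in> S" for r
  proof -
    define p where "p l = rep l r" for l
    have pS: "l \<ge> 1 \<Longrightarrow> p l \<in> S" for l unfolding p_def using rep_in[OF sg r] by blast
    define \<phi> where "\<phi> l = (SOME n. n \<in> N \<and> (\<forall>x. d (act n x) (act (p l) x) < e/4))" for l
    have \<phi>: "\<phi> l \<in> N \<and> (\<forall>x. d (act (\<phi> l) x) (act (p l) x) < e/4)" if "l \<ge> 1" for l
    proof -
      have "\<exists>n. n \<in> N \<and> (\<forall>x. d (act n x) (act (p l) x) < e/4)" using N(3)[OF pS[OF that]] by blast
      then show ?thesis unfolding \<phi>_def by (rule someI_ex)
    qed
    have "\<not> inj_on \<phi> {1..card N + 1}"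
    proof
      assume "inj_on \<phi> {1..card N + 1}"
      moreover have "\<phi> ` {1..card N + 1} \<subseteq> N" using \<phi> by auto
      ultimately have "card {1..card N + 1} \<le> card N" using card_inj_on_le N(1) by blast
      then show False by simp
    qed
    then obtain a0 b0 where ab0: "a0 \<in> {1..card N + 1}" "b0 \<in> {1..card N + 1}" "a0 \<noteq> b0" "\<phi> a0 = \<phi> b0"
      unfolding inj_on_def by blast
    define a where "a = max a0 b0"
    define b where "b = min a0 b0"
    have ab: "b < a" "1 \<le> b" "\<phi> a = \<phi> b" using ab0 by (auto simp: a_def b_def max_def min_def)
    have close: "d (act (p a) z) (act (p b) z) < e/2" for z
    proof -
      have "d (act (p a) z) (act (p b) z) \<le> d (act (p a) z) (act (\<phi> a) z) + d (act (\<phi> a) z) (act (p b) z)"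
        by (rule gauge_tri[OF g])
      also have "\<dots> = d (act (\<phi> a) z) (act (p a) z) + d (act (\<phi> b) z) (act (p b) z)"
        using gauge_sym[OF g] ab(3) by simp
      also have "\<dots> < e/2"
      proof -
        have "1 \<le> a" using ab by simp
        then have "d (act (\<phi> a) z) (act (p a) z) < e/4" using \<phi>[of a] by blast
        moreover have "d (act (\<phi> b) z) (act (p b) z) < e/4" using \<phi>[of b] ab(2) by blast
        ultimately show ?thesis by simp
      qed
      finally show ?thesis .
    qed
    define c where "c = a - b"
    have c1: "c \<ge> 1" using ab by (simp add: c_def)
    have pa: "p a = p c + p b" unfolding p_def c_def using rep_add[of "a - b" b r] ab by simp
    have cid: "d (act (p c) y) y < e/2" for y
    proof -
      have "act (p a) (act (- p b) y) = act (p c) y" by (simp add: pa act_add act_neg2)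
      moreover have "act (p b) (act (- p b) y) = y" by (rule act_neg2)
      ultimately show ?thesis using close[of "act (- p b) y"] by simp
    qed
    have pc: "p c = p (c - 1) + r" using c1 unfolding p_def by (cases c) auto
    have key: "d (act (p (c - 1)) y) (act (- r) y) < e/2" for y
    proof -
      have "act (p c) (act (- r) y) = act (p (c - 1)) y" by (simp add: pc act_add act_neg2)
      then show ?thesis using cid[of "act (- r) y"] by simp
    qed
    show ?thesis
    proof (cases "c - 1 = 0")
      case True
      then have "p (c - 1) = 0" by (simp add: p_def)
      then show ?thesis using key gauge_sym[OF g] e act_zero
        by (intro bexI[of _ 0]) (auto, smt (verit))
    next
      case False
      then have "p (c - 1) \<in> S" using pS by simp
      then obtain n where n: "n \<in> N" "\<And>x. d (act n x) (act (p (c - 1)) x) < e/4" using N(3) by blast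
      show ?thesis
      proof (intro bexI[of _ n] allI)
        fix y
        have "d (act (- r) y) (act n y) \<le> d (act (- r) y) (act (p (c - 1)) y) + d (act (p (c - 1)) y) (act n y)"
          by (rule gauge_tri[OF g])
        also have "\<dots> = d (act (p (c - 1)) y) (act (- r) y) + d (act n y) (act (p (c - 1)) y)"
          using gauge_sym[OF g] by simp
        also have "\<dots> < e" using key[of y] n(2)[of y] e by simp
        finally show "d (act (- r) y) (act n y) < e" .
      qed (use n in simp)
    qed
  qed
  moreover have "finite (insert 0 N)" using N(1) by simp
  ultimately show ?thesis by blast
qed

lemma tb_T:
  assumes g: "gauge d" and e: "e > 0"
  shows "\<exists>K. finite K \<and> (\<forall>t. \<exists>k\<in>K. \<forall>y. d (act t y) (act k y) < e)"
proof -
  obtain N where N: "finite N" "N \<subseteq> S" "\<And>s. s \<in> S \<Longrightarrow> \<exists>n\<in>N. \<forall>x. d (act n x) (act s x) < e/2"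
    using tb_S[OF g, of "e/2"] e by auto
  obtain d1 where d1: "gauge d1" "\<And>x y s. d1 x y < 1 \<Longrightarrow> s \<in> S \<Longrightarrow> d (act s x) (act s y) < e/2"
    using equicont[OF g, of "e/2"] e by auto
  obtain M where M: "finite M" "\<And>r. r \<in> S \<Longrightarrow> \<exists>m\<in>M. \<forall>y. d1 (act (- r) y) (act m y) < 1"
    using tb_negS[OF d1(1), of 1] by auto
  define K where "K = (\<lambda>(n,m). n + m) ` (N \<times> M)"
  have "finite K" unfolding K_def using N(1) M(1) by simp
  moreover have "\<exists>k\<in>K. \<forall>y. d (act t y) (act k y) < e" for t
  proof -
    have "compact {0, t}" by simp
    then obtain r where "(\<lambda>k. k + r) ` {0, t} \<subseteq> S" using th unfolding thick_def by blast
    then have rS: "r \<in> S" and trS: "t + r \<in> S" by auto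
    obtain n where n: "n \<in> N" "\<And>x. d (act n x) (act (t + r) x) < e/2" using N(3)[OF trS] by blast
    obtain m where m: "m \<in> M" "\<And>y. d1 (act (- r) y) (act m y) < 1" using M(2)[OF rS] by blast
    have nS: "n \<in> S" using n(1) N(2) by blast
    show ?thesis
    proof (intro bexI[of _ "n + m"] allI)
      show "n + m \<in> K" unfolding K_def using n(1) m(1) by force
      fix y
      define z where "z = act (- r) y"
      have ty: "act t y = act (t + r) z"
        unfolding z_def by (simp add: act_add act_neg2)
      have "d (act t y) (act (n + m) y) \<le> d (act (t + r) z) (act n z) + d (act n z) (act n (act m y))"
        using gauge_tri[OF g] by (simp add: ty act_add)
      also have "\<dots> = d (act n z) (act (t + r) z) + d (act n z) (act n (act m y))"
        using gauge_sym[OF g] by simp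
      also have "\<dots> < e" using n(2)[of z] d1(2)[OF m(2)[of y] nS] by (simp add: z_def)
      finally show "d (act t y) (act (n + m) y) < e" .
    qed
  qed
  ultimately show ?thesis by blast
qed

end


theorem theorem2p9:
  fixes act :: "'t::{topological_group_add, t2_space} \<Rightarrow> 'x::t2_space \<Rightarrow> 'x"
    and S :: "'t set"
  assumes "compact (UNIV :: 'x set)"
    and "flow act"
    and "subsemigroup S" and "thick S"
    and "lyapunov_stable act S"
  shows "ap_flow act"
  unfolding ap_flow_def
proof
  fix \<alpha> :: "('x \<times> 'x) set" assume "\<alpha> \<in> unif"
  then obtain W where W: "open W" "Id \<subseteq> W" "W \<subseteq> \<alpha>" by (auto simp: unif_def)
  obtain d where d: "gauge d" "\<And>x y. d x y < 1 \<Longrightarrow> (x,y) \<in> W"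
    using gauge_exists[OF assms(1) W(1,2)] by blast
  obtain K where K: "finite K" "\<And>t. \<exists>k\<in>K. \<forall>y. d (act t y) (act k y) < 1"
    using tb_T[OF assms d(1), of 1] by auto
  define A where "A = {u. \<forall>x. d x (act u x) < 1}"
  show "\<exists>A. syndetic A \<and> (\<forall>x. (\<lambda>s. act s x) ` A \<subseteq> ent \<alpha> {x})"
  proof (intro exI conjI allI)
    show "syndetic A" unfolding syndetic_def
    proof (intro exI conjI allI)
      show "compact K" using K(1) by (rule finite_imp_compact)
      fix t
      obtain k where k: "k \<in> K" "\<And>y. d (act (- t) y) (act k y) < 1" using K(2)[of "- t"] by blast
      have "\<forall>x. d x (act (k + t) x) < 1"
      proof
        fix x show "d x (act (k + t) x) < 1"
          using k(2)[of "act t x"] by (simp add: act_add[OF assms] act_neg1[OF assms])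
      qed
      then have "k + t \<in> A" unfolding A_def by simp
      then show "(\<lambda>k. k + t) ` K \<inter> A \<noteq> {}" using k(1) by blast
    qed
    fix x
    show "(\<lambda>s. act s x) ` A \<subseteq> ent \<alpha> {x}"
      using d(2) W(3) unfolding A_def ent_def by blast
  qed
qed

end
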